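(* Let $\Lambda\subset\mathbb{D}$ be a separated Blaschke sequence. Then there exist a partition $\Lambda=\Lambda_1\,\dot\cup\,\Lambda_2$ and constants $c,\eta>0$ such that for $k=1,2$ and all $\lambda\in\Lambda$, $$\log\frac{1}{|(B_k)_\lambda(\lambda)|}\ge c\log\frac{1}{|B_\lambda(\lambda)|}-\eta,$$ where $B_k=\prod_{\mu\in\Lambda_k}b_\mu$, and $(B_k)_\lambda=\prod_{\mu\in\Lambda_k\setminus\{\lambda\}}b_\mu$ if $\lambda\in\Lambda_k$, $(B_k)_\lambda=B_k$ otherwise.
   Context: For $\lambda\in\mathbb{D}$, $b_\lambda(z)=\frac{|\lambda|}{\lambda}\frac{\lambda-z}{1-\bar\lambda z}$ (with $b_0(z)=z$). For a Blaschke sequence $\Lambda$ (i.e. $\sum_{\lambda\in\Lambda}(1-|\lambda|^2)<\infty$), $B_\lambda=\prod_{\mu\in\Lambda\setminus\{\lambda\}}b_\mu$. $\Lambda$ is separated if $\inf_{\lambda\ne\mu,\ \lambda,\mu\in\Lambda}|b_\lambda(\mu)|>0$. *)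

theory Defs
  imports "HOL-Analysis.Analysis"
begin

definition blaschke_factor :: "complex \<Rightarrow> complex \<Rightarrow> complex" where
  "blaschke_factor l z =
     (if l = 0 then z
      else (complex_of_real (cmod l) / l) * ((l - z) / (1 - cnj l * z)))"

definition blaschke_seq :: "complex set \<Rightarrow> bool" where
  "blaschke_seq L \<longleftrightarrow> L \<subseteq> ball 0 1 \<and> (\<lambda>l. 1 - (cmod l)\<^sup>2) summable_on L"

definition separated :: "complex set \<Rightarrow> bool" where
  "separated L \<longleftrightarrow> (\<exists>\<delta>>0. \<forall>l\<in>L. \<forall>m\<in>L. l \<noteq> m \<longrightarrow> \<delta> \<le> cmod (blaschke_factor l m))"

definition blaschke_prod :: "complex set \<Rightarrow> complex \<Rightarrow> complex" where
  "blaschke_prod L z = Lim (finite_subsets_at_top L) (\<lambda>F. \<Prod>m\<in>F. blaschke_factor m z)"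

end

theory Submission
  imports Defs
begin

definition W :: "complex \<Rightarrow> complex \<Rightarrow> real" where
  "W l m = (1 - (cmod l)\<^sup>2) * (1 - (cmod m)\<^sup>2) / (cmod (1 - cnj l * m))\<^sup>2"

lemma key_identity:
  "(cmod (1 - cnj m * l))\<^sup>2 - (cmod (m - l))\<^sup>2 = (1 - (cmod m)\<^sup>2) * (1 - (cmod l)\<^sup>2)"
  unfolding cmod_power2 by (cases m; cases l) (simp add: power2_eq_square algebra_simps)

lemma cmod_swap: "cmod (1 - cnj m * l) = cmod (1 - cnj l * m)"
proof -
  have "cnj (1 - cnj m * l) = 1 - cnj l * m" by (simp add: mult.commute)
  then show ?thesis by (metis complex_mod_cnj)
qed

lemma denom_pos:
  assumes "cmod l < 1" "cmod m < 1"
  shows "cmod (1 - cnj m * l) > 0" "cmod (1 - cnj m * l) \<ge> 1 - cmod l" "cmod (1 - cnj m * l) \<ge> 1 - cmod m"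
proof -
  have n: "cmod (cnj m * l) = cmod m * cmod l" by (simp add: norm_mult)
  have "cmod m * cmod l \<le> cmod l" using assms by (simp add: mult_left_le_one_le)
  moreover have "cmod m * cmod l \<le> cmod m" using assms by (simp add: mult_right_le_one_le)
  moreover have "cmod (1 - cnj m * l) \<ge> 1 - cmod (cnj m * l)"
    by (metis norm_one norm_triangle_ineq2)
  ultimately show "cmod (1 - cnj m * l) \<ge> 1 - cmod l" "cmod (1 - cnj m * l) \<ge> 1 - cmod m"
    using n by linarith+
  then show "cmod (1 - cnj m * l) > 0" using assms by linarith
qed

lemma bf_norm:
  assumes "cmod l < 1" "cmod m < 1"
  shows "cmod (blaschke_factor m l) = cmod (m - l) / cmod (1 - cnj m * l)"
proof (cases "m = 0")
  case True then show ?thesis by (simp add: blaschke_factor_def norm_minus_commute)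
next
  case False
  have "cmod (complex_of_real (cmod m) / m) = 1" using False by (simp add: norm_divide)
  then show ?thesis using False by (simp add: blaschke_factor_def norm_mult norm_divide)
qed

lemma bf_norm_sq:
  assumes "cmod l < 1" "cmod m < 1"
  shows "(cmod (blaschke_factor m l))\<^sup>2 = 1 - W l m"
proof -
  have d: "cmod (1 - cnj m * l) > 0" using denom_pos assms by blast
  have "(cmod (blaschke_factor m l))\<^sup>2 = (cmod (m - l))\<^sup>2 / (cmod (1 - cnj m * l))\<^sup>2"
    using bf_norm[OF assms] by (simp add: power_divide)
  also have "\<dots> = 1 - (1 - (cmod m)\<^sup>2) * (1 - (cmod l)\<^sup>2) / (cmod (1 - cnj m * l))\<^sup>2"
    using key_identity[of m l] d by (simp add: field_simps)
  also have "\<dots> = 1 - W l m" unfolding W_def cmod_swap[of m l] by (simp add: mult.commute)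
  finally show ?thesis .
qed

lemma bf_sym: 
  assumes "cmod l < 1" "cmod m < 1"
  shows "cmod (blaschke_factor m l) = cmod (blaschke_factor l m)"
proof -
  have "cmod (blaschke_factor m l) = cmod (m - l) / cmod (1 - cnj m * l)" by (rule bf_norm[OF assms])
  also have "\<dots> = cmod (l - m) / cmod (1 - cnj l * m)"
    by (simp only: norm_minus_commute[of m l] cmod_swap[of m l])
  also have "\<dots> = cmod (blaschke_factor l m)" by (rule bf_norm[OF assms(2,1), symmetric])
  finally show ?thesis .
qed

lemma W_nonneg: "cmod l < 1 \<Longrightarrow> cmod m < 1 \<Longrightarrow> W l m \<ge> 0"
  unfolding W_def by (intro divide_nonneg_nonneg mult_nonneg_nonneg) (auto simp: abs_square_le_1 power_le_one)

lemma W_le1: "cmod l < 1 \<Longrightarrow> cmod m < 1 \<Longrightarrow> W l m \<le> 1"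
  using bf_norm_sq[of l m] by (metis diff_ge_0_iff_ge zero_le_power2 le_diff_eq add_0 diff_le_eq)

lemma bf_nonzero:
  assumes "cmod l < 1" "cmod m < 1" "m \<noteq> l"
  shows "blaschke_factor m l \<noteq> 0"
proof -
  have "cmod (1 - cnj m * l) > 0" using denom_pos assms by blast
  then show ?thesis using bf_norm[OF assms(1,2)] assms(3) by auto
qed

lemma finite_big:
  fixes g :: "'a \<Rightarrow> real"
  assumes "g summable_on A" "\<And>x. x \<in> A \<Longrightarrow> g x \<ge> 0" "\<epsilon> > 0"
  shows "finite {x\<in>A. \<epsilon> \<le> g x}"
proof (rule ccontr)
  assume inf: "infinite {x\<in>A. \<epsilon> \<le> g x}"
  obtain n :: nat where n: "real n * \<epsilon> > infsum g A"
    using reals_Archimedean3[OF assms(3)] by blast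
  obtain B where B: "finite B" "card B = n" "B \<subseteq> {x\<in>A. \<epsilon> \<le> g x}"
    using infinite_arbitrarily_large[OF inf] by blast
  have "real n * \<epsilon> = (\<Sum>x\<in>B. \<epsilon>)" using B by simp
  also have "\<dots> \<le> sum g B" using B by (intro sum_mono) auto
  also have "\<dots> \<le> infsum g A" using B assms by (intro finite_sum_le_infsum) auto
  finally show False using n by simp
qed

lemma one_minus_bf:
  assumes "cmod z < 1" "cmod m < 1"
  shows "cmod (1 - blaschke_factor m z) \<le> (1 - cmod m) * (1 + cmod z) / (1 - cmod z)"
proof (cases "m = 0")
  case True
  have "cmod (1 - z) \<le> 1 + cmod z" by (metis norm_one norm_triangle_ineq4)
  also have "\<dots> \<le> (1 + cmod z) / (1 - cmod z)"
    using assms by (simp add: le_divide_eq) (intro mult_left_le, auto)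
  finally show ?thesis using True by (simp add: blaschke_factor_def)
next
  case False
  have d: "cmod (1 - cnj m * z) \<ge> 1 - cmod z" "cmod (1 - cnj m * z) > 0"
    using denom_pos[OF assms] by auto
  have d0: "1 - cnj m * z \<noteq> 0" using d by auto
  have mm: "m * cnj m = complex_of_real ((cmod m)\<^sup>2)" by (simp only: complex_norm_square)
  have eq: "1 - blaschke_factor m z =
      complex_of_real (1 - cmod m) * (m + complex_of_real (cmod m) * z) / (m * (1 - cnj m * z))"
  proof -
    have "1 - blaschke_factor m z = (m * (1 - cnj m * z) - complex_of_real (cmod m) * (m - z)) / (m * (1 - cnj m * z))"
      using False d0 by (simp add: blaschke_factor_def field_simps)
    moreover have "m * (1 - cnj m * z) - complex_of_real (cmod m) * (m - z) =
        complex_of_real (1 - cmod m) * (m + complex_of_real (cmod m) * z)"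
    proof -
      have "m * (1 - cnj m * z) = m - (m * cnj m) * z" by (simp add: algebra_simps)
      then show ?thesis unfolding mm by (simp add: algebra_simps power2_eq_square)
    qed
    ultimately show ?thesis by simp
  qed
  have num: "cmod (m + complex_of_real (cmod m) * z) \<le> cmod m * (1 + cmod z)"
  proof -
    have "cmod (m + complex_of_real (cmod m) * z) \<le> cmod m + cmod (complex_of_real (cmod m) * z)"
      by (rule norm_triangle_ineq)
    also have "cmod (complex_of_real (cmod m) * z) = cmod m * cmod z" by (simp add: norm_mult)
    finally show ?thesis by (simp add: algebra_simps)
  qed
  have "cmod (1 - blaschke_factor m z) = (1 - cmod m) * cmod (m + complex_of_real (cmod m) * z) / (cmod m * cmod (1 - cnj m * z))"
  proof -
    have e1: "1 - complex_of_real (cmod m) = complex_of_real (1 - cmod m)" by simp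
    have "cmod (complex_of_real (1 - cmod m)) = \<bar>1 - cmod m\<bar>" by (rule norm_of_real)
    then have r: "cmod (complex_of_real (1 - cmod m)) = 1 - cmod m" using assms by simp
    have r2: "cmod (1 - complex_of_real (cmod m)) = 1 - cmod m" by (simp only: e1 r)
    show ?thesis unfolding eq norm_divide norm_mult r by (simp add: r2)
  qed
  also have "\<dots> \<le> (1 - cmod m) * (cmod m * (1 + cmod z)) / (cmod m * (1 - cmod z))"
  proof (rule frac_le)
    show "0 \<le> (1 - cmod m) * (cmod m * (1 + cmod z))" using assms by simp
    show "(1 - cmod m) * cmod (m + complex_of_real (cmod m) * z) \<le> (1 - cmod m) * (cmod m * (1 + cmod z))"
      using num assms by (intro mult_left_mono) auto
    show "0 < cmod m * (1 - cmod z)" using assms False by simp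
    show "cmod m * (1 - cmod z) \<le> cmod m * cmod (1 - cnj m * z)"
      using d by (intro mult_left_mono) auto
  qed
  also have "\<dots> = (1 - cmod m) * (1 + cmod z) / (1 - cmod z)" using False by simp
  finally show ?thesis .
qed

lemma Ln_small:
  fixes b :: complex
  assumes "cmod (1 - b) \<le> 1/2"
  shows "cmod (Ln b) \<le> 2 * cmod (1 - b)"
proof -
  define z where "z = b - 1"
  have zn: "cmod z \<le> 1/2" using assms by (simp add: z_def norm_minus_commute)
  have "cmod (Ln (1 + z) - z) \<le> (cmod z)\<^sup>2 / (1 - cmod z)"
    using zn by (intro Ln_approx_linear) auto
  also have "\<dots> \<le> cmod z"
    using zn by (simp add: field_simps power2_eq_square) (intro mult_left_le, auto)
  finally have h: "cmod (Ln (1 + z) - z) \<le> cmod z" .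
  have "cmod (Ln (1 + z)) \<le> cmod z + cmod (Ln (1 + z) - z)" by (rule norm_triangle_sub)
  then have "cmod (Ln (1 + z)) \<le> 2 * cmod z" using h by simp
  then show ?thesis by (simp add: z_def norm_minus_commute)
qed

lemma ln_inv_exp: "ln (1 / exp (x::real)) = - x"
proof -
  have e: "1 / exp x = exp (- x)" by (simp add: exp_minus divide_inverse)
  show ?thesis unfolding e by simp
qed

lemma prod_conv:
  assumes A: "A \<subseteq> ball 0 1" "(\<lambda>m. 1 - (cmod m)\<^sup>2) summable_on A" and l: "cmod l < 1" "l \<notin> A"
  shows "(\<lambda>m. - ln (cmod (blaschke_factor m l))) summable_on A"
    and "blaschke_prod A l \<noteq> 0"
    and "ln (1 / cmod (blaschke_prod A l)) = infsum (\<lambda>m. - ln (cmod (blaschke_factor m l))) A"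
proof -
  define f where "f m = Ln (blaschke_factor m l)" for m
  have Am: "cmod m < 1" if "m \<in> A" for m using A that by auto
  have nz: "blaschke_factor m l \<noteq> 0" if "m \<in> A" for m
    using bf_nonzero[OF l(1) Am[OF that]] l(2) that by auto
  define C where "C = (1 + cmod l) / (1 - cmod l)"
  have C: "C > 0" using l unfolding C_def by (intro divide_pos_pos) (auto intro: add_pos_nonneg)
  have b1: "cmod (1 - blaschke_factor m l) \<le> C * (1 - (cmod m)\<^sup>2)" if "m \<in> A" for m
  proof -
    have "cmod (1 - blaschke_factor m l) \<le> (1 - cmod m) * C"
      using one_minus_bf[OF l(1) Am[OF that]] by (simp add: C_def)
    also have "\<dots> \<le> (1 - (cmod m)\<^sup>2) * C"
      using C Am[OF that] by (intro mult_right_mono) (auto simp: power2_eq_square mult_left_le_one_le)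
    finally show ?thesis by (simp add: mult.commute)
  qed
  define E where "E = {m\<in>A. 1/(2*C) \<le> 1 - (cmod m)\<^sup>2}"
  have Ef: "finite E" unfolding E_def
    using C Am by (intro finite_big[OF A(2)]) (auto simp: abs_square_le_1 power_le_one less_imp_le)
  have small: "cmod (f m) \<le> (2*C) * (1 - (cmod m)\<^sup>2)" if "m \<in> A - E" for m
  proof -
    have "1 - (cmod m)\<^sup>2 < 1/(2*C)" using that by (auto simp: E_def)
    then have "C * (1 - (cmod m)\<^sup>2) < 1/2" using C by (simp add: field_simps)
    then have "cmod (1 - blaschke_factor m l) \<le> 1/2" using b1[of m] that by auto
    from Ln_small[OF this] b1[of m] that show ?thesis unfolding f_def by auto
  qed
  have s1: "(\<lambda>m. (2*C) * (1 - (cmod m)\<^sup>2)) summable_on (A - E)"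
    by (intro summable_on_cmult_right summable_on_subset[OF A(2)]) auto
  have "(\<lambda>m. norm (f m)) summable_on (A - E)"
    by (rule Infinite_Sum.abs_summable_on_comparison_test'[OF s1 small])
  then have fs1: "f summable_on (A - E)" by (rule abs_summable_summable)
  have fs2: "f summable_on (A \<inter> E)" using Ef by (intro summable_on_finite) simp
  have "f summable_on ((A - E) \<union> (A \<inter> E))"
    by (rule summable_on_Un_disjoint[OF fs1 fs2]) blast
  moreover have "(A - E) \<union> (A \<inter> E) = A" by blast
  ultimately have fs: "f summable_on A" by simp
  define S where "S = infsum f A"
  have hs: "(f has_sum S) A" using fs by (simp add: S_def)
  then have "(sum f \<longlongrightarrow> S) (finite_subsets_at_top A)" by (simp add: has_sum_def)
  then have t: "((\<lambda>F. exp (sum f F)) \<longlongrightarrow> exp S) (finite_subsets_at_top A)"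
    by (intro tendsto_exp)
  have ev: "eventually (\<lambda>F. exp (sum f F) = (\<Prod>m\<in>F. blaschke_factor m l)) (finite_subsets_at_top A)"
  proof (rule eventually_finite_subsets_at_top_weakI)
    fix X assume X: "finite X" "X \<subseteq> A"
    have "exp (sum f X) = (\<Prod>m\<in>X. exp (f m))" by (rule exp_sum[OF X(1)])
    also have "\<dots> = (\<Prod>m\<in>X. blaschke_factor m l)"
      by (intro prod.cong refl) (use X nz in \<open>auto simp: f_def\<close>)
    finally show "exp (sum f X) = (\<Prod>m\<in>X. blaschke_factor m l)" .
  qed
  have "((\<lambda>F. \<Prod>m\<in>F. blaschke_factor m l) \<longlongrightarrow> exp S) (finite_subsets_at_top A)"
    using tendsto_cong[OF ev] t by simp
  then have bp: "blaschke_prod A l = exp S"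
    unfolding blaschke_prod_def by (intro tendsto_Lim) auto
  then show "blaschke_prod A l \<noteq> 0" by simp
  have "((\<lambda>m. Re (f m)) has_sum Re S) A" by (rule has_sum_Re[OF hs])
  moreover have "((\<lambda>m. ln (cmod (blaschke_factor m l))) has_sum Re S) A \<longleftrightarrow> ((\<lambda>m. Re (f m)) has_sum Re S) A"
    by (rule has_sum_cong) (use nz in \<open>simp add: f_def\<close>)
  ultimately have "((\<lambda>m. ln (cmod (blaschke_factor m l))) has_sum Re S) A"
    by blast
  then have hs2: "((\<lambda>m. - ln (cmod (blaschke_factor m l))) has_sum (- Re S)) A"
    by (simp add: has_sum_uminus)
  then show "(\<lambda>m. - ln (cmod (blaschke_factor m l))) summable_on A"
    unfolding summable_on_def by blast
  show "ln (1 / cmod (blaschke_prod A l)) = infsum (\<lambda>m. - ln (cmod (blaschke_factor m l))) A"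
  proof -
    have "ln (1 / cmod (blaschke_prod A l)) = ln (1 / exp (Re S))" by (simp only: bp norm_exp_eq_Re)
    also have "\<dots> = - Re S" by (rule ln_inv_exp)
    also have "\<dots> = infsum (\<lambda>m. - ln (cmod (blaschke_factor m l))) A" by (rule infsumI[OF hs2, symmetric])
    finally show ?thesis .
  qed
qed

definition tv :: "(nat \<Rightarrow> real) \<Rightarrow> nat \<Rightarrow> nat \<Rightarrow> real" where
  "tv y a b = (\<Sum>i=a..<b-1. \<bar>y (Suc i) - y i\<bar>)"

definition altD :: "(nat \<Rightarrow> real) \<Rightarrow> nat \<Rightarrow> real" where
  "altD y n = (\<Sum>i<n. if even i then y i else - y i)"

lemma tv_nonneg: "tv y a b \<ge> 0"
  unfolding tv_def by (intro sum_nonneg) auto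

lemma tv_step: "tv y 0 (Suc (Suc k)) = tv y 0 (Suc k) + \<bar>y (Suc k) - y k\<bar>"
  unfolding tv_def by simp

lemma altD_even: "\<bar>altD y (2*k)\<bar> \<le> tv y 0 (2*k)"
proof (induction k)
  case 0 then show ?case by (simp add: altD_def tv_def)
next
  case (Suc k)
  have D: "altD y (2 * Suc k) = altD y (2*k) + (y (2*k) - y (Suc (2*k)))"
    by (simp add: altD_def)
  have T: "tv y 0 (2 * Suc k) = tv y 0 (Suc (2*k)) + \<bar>y (Suc (2*k)) - y (2*k)\<bar>"
    using tv_step[of y "2*k"] by simp
  have T2: "tv y 0 (Suc (2*k)) \<ge> tv y 0 (2*k)"
    unfolding tv_def by (intro sum_mono2) auto
  show ?case using Suc D T T2 by (simp add: abs_minus_commute)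
qed

lemma altD_bound:
  assumes "\<And>i. i < n \<Longrightarrow> 0 \<le> y i \<and> y i \<le> M" "M \<ge> 0"
  shows "\<bar>altD y n\<bar> \<le> tv y 0 n + M"
proof (cases "even n")
  case True
  then obtain k where n: "n = 2*k" by auto
  show ?thesis using altD_even[of y k] tv_nonneg[of y 0 n] assms(2) n by auto
next
  case False
  then obtain k where n: "n = Suc (2*k)" by (metis oddE Suc_eq_plus1)
  have D: "altD y n = altD y (2*k) + y (2*k)" by (simp add: altD_def n)
  have T2: "tv y 0 n \<ge> tv y 0 (2*k)"
    unfolding tv_def n by (intro sum_mono2) auto
  show ?thesis using altD_even[of y k] D T2 assms(1)[of "2*k"] n by auto
qed

lemma alt_sums:
  fixes y :: "nat \<Rightarrow> real"
  shows "(\<Sum>i\<in>{i. i<n \<and> even i}. y i) = ((\<Sum>i<n. y i) + altD y n) / 2"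
    and "(\<Sum>i\<in>{i. i<n \<and> odd i}. y i) = ((\<Sum>i<n. y i) - altD y n) / 2"
proof -
  have e: "(\<Sum>i\<in>{i. i<n \<and> even i}. y i) = (\<Sum>i<n. if even i then y i else 0)"
    by (simp add: sum.If_cases Int_def conj_commute lessThan_def)
  have o: "(\<Sum>i\<in>{i. i<n \<and> odd i}. y i) = (\<Sum>i<n. if even i then 0 else y i)"
    by (simp add: sum.If_cases Int_def conj_commute lessThan_def)
  have s: "(\<Sum>i<n. y i) = (\<Sum>i<n. if even i then y i else 0) + (\<Sum>i<n. if even i then 0 else y i)"
    by (simp add: sum.distrib[symmetric]) (intro sum.cong, auto)
  have d: "altD y n = (\<Sum>i<n. if even i then y i else 0) - (\<Sum>i<n. if even i then 0 else y i)"
    unfolding altD_def by (simp add: sum_subtractf[symmetric]) (intro sum.cong, auto)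
  show "(\<Sum>i\<in>{i. i<n \<and> even i}. y i) = ((\<Sum>i<n. y i) + altD y n) / 2"
    using e s d by simp
  show "(\<Sum>i\<in>{i. i<n \<and> odd i}. y i) = ((\<Sum>i<n. y i) - altD y n) / 2"
    using o s d by simp
qed

lemma alt_lower:
  assumes "\<And>i. i < n \<Longrightarrow> 0 \<le> y i \<and> y i \<le> M" "tv y 0 n \<le> V" "M \<ge> 0"
  shows "(\<Sum>i\<in>{i. i<n \<and> even i}. y i) \<ge> ((\<Sum>i<n. y i) - V - M) / 2"
    and "(\<Sum>i\<in>{i. i<n \<and> odd i}. y i) \<ge> ((\<Sum>i<n. y i) - V - M) / 2"
  using alt_sums[where n=n and y=y] altD_bound[where n=n and y=y and M=M, OF assms(1) assms(3)] assms(2) by (simp_all add: abs_le_iff)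

lemma sum_Un_le:
  fixes f :: "'a \<Rightarrow> real"
  assumes "finite A" "finite B" "\<And>x. f x \<ge> 0"
  shows "sum f (A \<union> B) \<le> sum f A + sum f B"
  using sum_Un[OF assms(1,2), of f] sum_nonneg[of "A \<inter> B" f] assms(3) by simp

lemma tv_split:
  assumes "a \<le> b" "b \<le> c" "\<And>i. i < c \<Longrightarrow> 0 \<le> y i \<and> y i \<le> M" "M \<ge> 0"
  shows "tv y a c \<le> tv y a b + tv y b c + M"
proof -
  have sub: "{a..<c-1} \<subseteq> {a..<b-1} \<union> ({b-1} \<inter> {a..<c-1}) \<union> {b..<c-1}" by auto
  have "tv y a c \<le> (\<Sum>i\<in>{a..<b-1} \<union> ({b-1} \<inter> {a..<c-1}) \<union> {b..<c-1}. \<bar>y (Suc i) - y i\<bar>)"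
    unfolding tv_def by (intro sum_mono2[OF _ sub]) auto
  also have "\<dots> \<le> (\<Sum>i\<in>{a..<b-1} \<union> ({b-1} \<inter> {a..<c-1}). \<bar>y (Suc i) - y i\<bar>) + tv y b c"
    unfolding tv_def by (intro sum_Un_le) auto
  also have "\<dots> \<le> tv y a b + (\<Sum>i\<in>{b-1} \<inter> {a..<c-1}. \<bar>y (Suc i) - y i\<bar>) + tv y b c"
    unfolding tv_def by (intro add_right_mono sum_Un_le) auto
  also have "(\<Sum>i\<in>{b-1} \<inter> {a..<c-1}. \<bar>y (Suc i) - y i\<bar>) \<le> M"
  proof (cases "b - 1 \<in> {a..<c-1}")
    case True
    then have "{b-1} \<inter> {a..<c-1} = {b-1}" by auto
    moreover have "Suc (b-1) < c" "b - 1 < c" using True by auto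
    ultimately show ?thesis using assms(3)[of "Suc (b-1)"] assms(3)[of "b-1"] by auto
  next
    case False
    then have "{b-1} \<inter> {a..<c-1} = {}" by auto
    then show ?thesis using assms(4) by simp
  qed
  finally show ?thesis by simp
qed

lemma tv_mono_piece:
  assumes "\<And>i j. a \<le> i \<Longrightarrow> i \<le> j \<Longrightarrow> j < b \<Longrightarrow> y i \<le> y j"
  shows "a < b \<Longrightarrow> tv y a b = y (b-1) - y a"
  using assms
proof (induction b)
  case 0 then show ?case by simp
next
  case (Suc b)
  show ?case
  proof (cases "a < b")
    case True
    have "tv y a (Suc b) = tv y a b + \<bar>y b - y (b-1)\<bar>"
      using True unfolding tv_def by (cases b) auto
    also have "tv y a b = y (b-1) - y a" using Suc True by auto
    also have "\<bar>y b - y (b-1)\<bar> = y b - y (b-1)" using Suc.prems(2)[of "b-1" b] True by auto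
    finally show ?thesis by simp
  next
    case False
    then have "a = b" using Suc by auto
    then show ?thesis by (simp add: tv_def)
  qed
qed

lemma tv_piece_le:
  assumes "(\<forall>i j. a \<le> i \<longrightarrow> i \<le> j \<longrightarrow> j < b \<longrightarrow> y i \<le> y j) \<or> (\<forall>i j. a \<le> i \<longrightarrow> i \<le> j \<longrightarrow> j < b \<longrightarrow> y j \<le> y i)"
    and "\<And>i. i < b \<Longrightarrow> 0 \<le> y i \<and> y i \<le> M" "M \<ge> 0"
  shows "tv y a b \<le> M"
proof (cases "a < b")
  case False then show ?thesis using assms(3) by (auto simp: tv_def)
next
  case True
  have yb: "0 \<le> y (b-1) \<and> y (b-1) \<le> M" "0 \<le> y a \<and> y a \<le> M" using assms(2) True by auto
  from assms(1) show ?thesis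
  proof
    assume "\<forall>i j. a \<le> i \<longrightarrow> i \<le> j \<longrightarrow> j < b \<longrightarrow> y i \<le> y j"
    then show ?thesis using tv_mono_piece[of a b y] True yb by auto
  next
    assume h: "\<forall>i j. a \<le> i \<longrightarrow> i \<le> j \<longrightarrow> j < b \<longrightarrow> y j \<le> y i"
    have "tv (\<lambda>i. - y i) a b = - y (b-1) + y a" using tv_mono_piece[of a b "\<lambda>i. - y i"] True h by auto
    moreover have "tv (\<lambda>i. - y i) a b = tv y a b" unfolding tv_def by (simp add: abs_minus_commute)
    ultimately show ?thesis using yb by auto
  qed
qed

lemma downclosed_eq:
  fixes S :: "nat set"
  assumes "finite S" "\<And>i j. i \<in> S \<Longrightarrow> j \<le> i \<Longrightarrow> j \<in> S"
  shows "S = {..<card S}"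
proof (cases "S = {}")
  case True then show ?thesis by simp
next
  case False
  have "S = {..Max S}"
  proof
    show "S \<subseteq> {..Max S}" using assms by auto
    show "{..Max S} \<subseteq> S" using assms False Max_in by (auto intro: assms(2))
  qed
  then show ?thesis by (metis card_atMost lessThan_Suc_atMost)
qed

lemma cut_index:
  fixes \<theta> :: "nat \<Rightarrow> real" and t :: real
  assumes mono: "\<And>i j. i \<le> j \<Longrightarrow> j < n \<Longrightarrow> \<theta> i \<le> \<theta> j"
  defines "k \<equiv> card {i. i < n \<and> \<theta> i \<le> t}"
  shows "k \<le> n" "\<And>i. i < n \<Longrightarrow> i < k \<longleftrightarrow> \<theta> i \<le> t"
proof -
  let ?S = "{i. i < n \<and> \<theta> i \<le> t}"
  have S: "?S = {..<k}" unfolding k_def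
    by (rule downclosed_eq) (auto intro: order_trans[OF mono])
  show "k \<le> n" unfolding k_def by (rule order_trans[OF card_mono[of "{..<n}"]]) auto
  fix i assume "i < n"
  then show "i < k \<longleftrightarrow> \<theta> i \<le> t" using S by (metis (no_types, lifting) lessThan_iff mem_Collect_eq)
qed

lemma cut_mono:
  fixes \<theta> :: "nat \<Rightarrow> real"
  assumes "t \<le> s"
  shows "card {i. i < n \<and> \<theta> i \<le> t} \<le> card {i. i < n \<and> \<theta> i \<le> s}"
  using assms by (intro card_mono) auto

lemma tv_four_pieces:
  fixes \<theta> :: "nat \<Rightarrow> real" and g :: "real \<Rightarrow> real"
  assumes mono: "\<And>i j. i \<le> j \<Longrightarrow> j < n \<Longrightarrow> \<theta> i \<le> \<theta> j"
    and R: "\<And>i. i < n \<Longrightarrow> \<theta> i \<in> R"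
    and bnd: "\<And>x. x \<in> R \<Longrightarrow> 0 \<le> g x \<and> g x \<le> M" and M0: "M \<ge> 0"
    and t: "t1 \<le> t2" "t2 \<le> t3"
    and p1: "\<And>x y. x \<in> R \<Longrightarrow> y \<in> R \<Longrightarrow> x \<le> y \<Longrightarrow> y \<le> t1 \<Longrightarrow> g y \<le> g x"
    and p2: "\<And>x y. x \<in> R \<Longrightarrow> y \<in> R \<Longrightarrow> t1 < x \<Longrightarrow> x \<le> y \<Longrightarrow> y \<le> t2 \<Longrightarrow> g x \<le> g y"
    and p3: "\<And>x y. x \<in> R \<Longrightarrow> y \<in> R \<Longrightarrow> t2 < x \<Longrightarrow> x \<le> y \<Longrightarrow> y \<le> t3 \<Longrightarrow> g y \<le> g x"
    and p4: "\<And>x y. x \<in> R \<Longrightarrow> y \<in> R \<Longrightarrow> t3 < x \<Longrightarrow> x \<le> y \<Longrightarrow> g x \<le> g y"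
  shows "tv (\<lambda>i. g (\<theta> i)) 0 n \<le> 7 * M"
proof -
  define y where "y i = g (\<theta> i)" for i
  define k1 where "k1 = card {i. i < n \<and> \<theta> i \<le> t1}"
  define k2 where "k2 = card {i. i < n \<and> \<theta> i \<le> t2}"
  define k3 where "k3 = card {i. i < n \<and> \<theta> i \<le> t3}"
  have c1: "\<And>i. i < n \<Longrightarrow> i < k1 \<longleftrightarrow> \<theta> i \<le> t1" "k1 \<le> n" using cut_index[OF mono] unfolding k1_def by auto
  have c2: "\<And>i. i < n \<Longrightarrow> i < k2 \<longleftrightarrow> \<theta> i \<le> t2" "k2 \<le> n" using cut_index[OF mono] unfolding k2_def by auto
  have c3: "\<And>i. i < n \<Longrightarrow> i < k3 \<longleftrightarrow> \<theta> i \<le> t3" "k3 \<le> n" using cut_index[OF mono] unfolding k3_def by auto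
  have k12: "k1 \<le> k2" unfolding k1_def k2_def using t by (intro cut_mono) auto
  have k23: "k2 \<le> k3" unfolding k2_def k3_def using t by (intro cut_mono) auto
  have yb: "\<And>i. i < n \<Longrightarrow> 0 \<le> y i \<and> y i \<le> M" using bnd R by (auto simp: y_def)
  have yb1: "\<And>i. i < k1 \<Longrightarrow> 0 \<le> y i \<and> y i \<le> M" using yb c1 by auto
  have yb2: "\<And>i. i < k2 \<Longrightarrow> 0 \<le> y i \<and> y i \<le> M" using yb c2 by auto
  have yb3: "\<And>i. i < k3 \<Longrightarrow> 0 \<le> y i \<and> y i \<le> M" using yb c3 by auto
  have T1: "tv y 0 k1 \<le> M"
  proof (rule tv_piece_le[OF disjI2 yb1 M0])
    show "\<forall>i j. 0 \<le> i \<longrightarrow> i \<le> j \<longrightarrow> j < k1 \<longrightarrow> y j \<le> y i"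
    proof (intro allI impI)
      fix i j assume h: "0 \<le> i" "i \<le> j" "j < k1"
      then have ij: "i < n" "j < n" using c1 by auto
      have "\<theta> j \<le> t1" using c1(1)[OF ij(2)] h(3) by simp
      then show "y j \<le> y i" using h ij R mono[of i j] unfolding y_def
        by (intro p1) auto
    qed
  qed
  have T2: "tv y k1 k2 \<le> M"
  proof (rule tv_piece_le[OF disjI1 yb2 M0])
    show "\<forall>i j. k1 \<le> i \<longrightarrow> i \<le> j \<longrightarrow> j < k2 \<longrightarrow> y i \<le> y j"
    proof (intro allI impI)
      fix i j assume h: "k1 \<le> i" "i \<le> j" "j < k2"
      then have ij: "i < n" "j < n" using c2 by auto
      have "t1 < \<theta> i" using c1(1)[OF ij(1)] h(1) by simp
      moreover have "\<theta> j \<le> t2" using c2(1)[OF ij(2)] h(3) by simp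
      ultimately show "y i \<le> y j" using h ij R mono[of i j] unfolding y_def
        by (intro p2) auto
    qed
  qed
  have T3: "tv y k2 k3 \<le> M"
  proof (rule tv_piece_le[OF disjI2 yb3 M0])
    show "\<forall>i j. k2 \<le> i \<longrightarrow> i \<le> j \<longrightarrow> j < k3 \<longrightarrow> y j \<le> y i"
    proof (intro allI impI)
      fix i j assume h: "k2 \<le> i" "i \<le> j" "j < k3"
      then have ij: "i < n" "j < n" using c3 by auto
      have "t2 < \<theta> i" using c2(1)[OF ij(1)] h(1) by simp
      moreover have "\<theta> j \<le> t3" using c3(1)[OF ij(2)] h(3) by simp
      ultimately show "y j \<le> y i" using h ij R mono[of i j] unfolding y_def
        by (intro p3) auto
    qed
  qed
  have T4: "tv y k3 n \<le> M"
  proof (rule tv_piece_le[OF disjI1 yb M0])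
    show "\<forall>i j. k3 \<le> i \<longrightarrow> i \<le> j \<longrightarrow> j < n \<longrightarrow> y i \<le> y j"
    proof (intro allI impI)
      fix i j assume h: "k3 \<le> i" "i \<le> j" "j < n"
      then have ij: "i < n" "j < n" by auto
      have "t3 < \<theta> i" using c3(1)[OF ij(1)] h(1) by simp
      then show "y i \<le> y j" using h ij R mono[of i j] unfolding y_def
        by (intro p4) auto
    qed
  qed
  have "tv y 0 n \<le> tv y 0 k3 + tv y k3 n + M" using c3 yb by (intro tv_split M0) auto
  moreover have "tv y 0 k3 \<le> tv y 0 k2 + tv y k2 k3 + M" using k23 yb3 by (intro tv_split M0) auto
  moreover have "tv y 0 k2 \<le> tv y 0 k1 + tv y k1 k2 + M" using k12 yb2 by (intro tv_split M0) auto
  ultimately have "tv y 0 n \<le> 7 * M" using T1 T2 T3 T4 by linarith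
  moreover have "y = (\<lambda>i. g (\<theta> i))" by (simp add: y_def fun_eq_iff)
  ultimately show ?thesis by simp
qed

lemma rcis_norm_sq_1m:
  assumes "\<rho> \<ge> 0"
  shows "(cmod (1 - rcis \<rho> \<phi>))\<^sup>2 = 1 + \<rho>\<^sup>2 - 2 * \<rho> * cos \<phi>"
proof -
  have "(cmod (1 - rcis \<rho> \<phi>))\<^sup>2 = (1 - \<rho> * cos \<phi>)\<^sup>2 + (\<rho> * sin \<phi>)\<^sup>2"
    unfolding cmod_power2 by simp
  also have "\<dots> = 1 + \<rho>\<^sup>2 * ((sin \<phi>)\<^sup>2 + (cos \<phi>)\<^sup>2) - 2 * \<rho> * cos \<phi>"
    by (simp only: power2_eq_square) algebra
  finally show ?thesis by simp
qed

lemma g_denom: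
  assumes "cmod l < 1" "0 \<le> r"
  shows "(cmod (1 - cnj l * rcis r \<theta>))\<^sup>2 = 1 + (cmod l * r)\<^sup>2 - 2 * (cmod l * r) * cos (\<theta> - Arg l)"
proof -
  have "cnj l * rcis r \<theta> = rcis (cmod l * r) (\<theta> - Arg l)"
  proof -
    have "cnj l = rcis (cmod l) (- Arg l)" by (rule rcis_cnj)
    then show ?thesis by (simp add: rcis_mult)
  qed
  then show ?thesis using rcis_norm_sq_1m[of "cmod l * r" "\<theta> - Arg l"] assms by simp
qed

definition Gf :: "real \<Rightarrow> real \<Rightarrow> real \<Rightarrow> real" where
  "Gf a r c = (1 - a\<^sup>2) * (1 - r\<^sup>2) / (1 + (a * r)\<^sup>2 - 2 * (a * r) * c)"

lemma W_rcis:
  assumes "cmod l < 1" "0 \<le> r" "r < 1"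
  shows "W l (rcis r \<theta>) = Gf (cmod l) r (cos (\<theta> - Arg l))"
  unfolding W_def Gf_def using g_denom[OF assms(1,2)] assms by simp

lemma Gf_denom_pos:
  fixes a r c c' :: real
  assumes "0 \<le> a" "a < 1" "0 \<le> r" "r < 1" "c \<le> 1"
  shows "1 + (a * r)\<^sup>2 - 2 * (a * r) * c \<ge> (1 - a * r)\<^sup>2" "(1 - a * r)\<^sup>2 > 0"
proof -
  have "a * r \<le> a" using assms by (intro mult_right_le_one_le) auto
  then have ar: "0 \<le> a * r" "a * r < 1" using assms by auto
  have "2 * (a * r) * c \<le> 2 * (a * r)" using ar assms by (simp add: mult_left_le)
  then show "1 + (a * r)\<^sup>2 - 2 * (a * r) * c \<ge> (1 - a * r)\<^sup>2" by (simp add: power2_eq_square algebra_simps)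
  show "(1 - a * r)\<^sup>2 > 0" using ar by simp
qed

lemma Gf_mono:
  fixes a r c c' :: real
  assumes "0 \<le> a" "a < 1" "0 \<le> r" "r < 1" "c \<le> c'" "c' \<le> 1"
  shows "Gf a r c \<le> Gf a r c'"
proof -
  have p1: "1 + (a * r)\<^sup>2 - 2 * (a * r) * c' > 0" using Gf_denom_pos[OF assms(1-4,6)] by linarith
  have "2 * (a * r) * c \<le> 2 * (a * r) * c'" using assms by (intro mult_left_mono) auto
  then have le: "1 + (a * r)\<^sup>2 - 2 * (a * r) * c' \<le> 1 + (a * r)\<^sup>2 - 2 * (a * r) * c" by linarith
  have num: "0 \<le> (1 - a\<^sup>2) * (1 - r\<^sup>2)" using assms by (auto simp: power_le_one)
  show ?thesis unfolding Gf_def using p1 le num by (intro divide_left_mono) auto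
qed

lemma Gf_bounds:
  fixes a r c c' :: real
  assumes "0 \<le> a" "a < 1" "0 \<le> r" "r < 1" "-1 \<le> c" "c \<le> 1"
  shows "0 \<le> Gf a r c" "Gf a r c \<le> Gf a r 1"
proof -
  have p1: "1 + (a * r)\<^sup>2 - 2 * (a * r) * c > 0" using Gf_denom_pos[OF assms(1-4,6)] by linarith
  have num: "0 \<le> (1 - a\<^sup>2) * (1 - r\<^sup>2)" using assms by (auto simp: power_le_one)
  show "0 \<le> Gf a r c" unfolding Gf_def using p1 num by simp
  show "Gf a r c \<le> Gf a r 1" using Gf_mono assms by auto
qed

lemma cos_pieces:
  fixes x y \<alpha> :: real
  assumes "-pi \<le> x" "y \<le> pi" "-pi < \<alpha>" "\<alpha> \<le> pi" "x \<le> y"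
  shows "y \<le> \<alpha> - pi \<Longrightarrow> cos (y - \<alpha>) \<le> cos (x - \<alpha>)"
    and "\<alpha> - pi < x \<Longrightarrow> y \<le> \<alpha> \<Longrightarrow> cos (x - \<alpha>) \<le> cos (y - \<alpha>)"
    and "\<alpha> < x \<Longrightarrow> y \<le> \<alpha> + pi \<Longrightarrow> cos (y - \<alpha>) \<le> cos (x - \<alpha>)"
    and "\<alpha> + pi < x \<Longrightarrow> cos (x - \<alpha>) \<le> cos (y - \<alpha>)"
proof -
  assume h: "y \<le> \<alpha> - pi"
  have "cos (y - \<alpha> + 2*pi) \<le> cos (x - \<alpha> + 2*pi)"
    using assms h by (intro cos_monotone_0_pi_le) auto
  then show "cos (y - \<alpha>) \<le> cos (x - \<alpha>)" by (simp add: cos_periodic)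
next
  assume h: "\<alpha> - pi < x" "y \<le> \<alpha>"
  have "cos (- (x - \<alpha>)) \<le> cos (- (y - \<alpha>))"
    using assms h by (intro cos_monotone_0_pi_le) auto
  then show "cos (x - \<alpha>) \<le> cos (y - \<alpha>)" by (simp only: cos_minus)
next
  assume h: "\<alpha> < x" "y \<le> \<alpha> + pi"
  show "cos (y - \<alpha>) \<le> cos (x - \<alpha>)"
    using assms h by (intro cos_monotone_0_pi_le) auto
next
  assume h: "\<alpha> + pi < x"
  have "cos (2*pi - (x - \<alpha>)) \<le> cos (2*pi - (y - \<alpha>))"
    using assms h by (intro cos_monotone_0_pi_le) auto
  moreover have "cos (2*pi - t) = cos t" for t by (simp add: cos_diff)
  ultimately show "cos (x - \<alpha>) \<le> cos (y - \<alpha>)" by simp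
qed

definition ann :: "complex \<Rightarrow> nat" where
  "ann z = (LEAST j. (1/2::real)^(Suc j) < 1 - cmod z)"

lemma ann_props:
  assumes "cmod z < 1"
  shows "(1/2::real)^(Suc (ann z)) < 1 - cmod z" "1 - cmod z \<le> (1/2::real)^(ann z)"
proof -
  obtain n where n: "(1/2::real)^n < 1 - cmod z" using real_arch_pow_inv[of "1 - cmod z" "1/2"] assms by auto
  have ex: "(1/2::real)^(Suc n) < 1 - cmod z"
    using n by (rule le_less_trans[rotated]) (simp add: power_decreasing)
  show "(1/2::real)^(Suc (ann z)) < 1 - cmod z" unfolding ann_def by (rule LeastI[where P="\<lambda>j. (1/2::real)^(Suc j) < 1 - cmod z", OF ex])
  show "1 - cmod z \<le> (1/2::real)^(ann z)"
  proof (cases "ann z")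
    case 0 then show ?thesis by simp
  next
    case (Suc k)
    have "k < ann z" using Suc by simp
    then have "\<not> ((1/2::real)^(Suc k) < 1 - cmod z)" unfolding ann_def by (rule not_less_Least)
    then show ?thesis using Suc by simp
  qed
qed

definition rr :: "nat \<Rightarrow> real" where "rr j = 1 - (1/2)^j"

lemma rr_props: "0 \<le> rr j" "rr j < 1"
  unfolding rr_def by (auto simp: power_le_one)

lemma frac_cmp:
  fixes A x y b d k :: real
  assumes "b > 0" "d > 0" "A \<ge> 0" "x * d \<le> k * y * b"
  shows "A * x / b \<le> k * (A * y / d)"
proof -
  have "A * x * d \<le> A * (k * y * b)" using assms mult_left_mono[OF assms(4) assms(3)] by (simp add: mult.assoc)
  then show ?thesis using assms by (simp add: field_simps)
qed

lemma harnack: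
  assumes l: "cmod l < 1" and m: "cmod m < 1"
  defines "m' \<equiv> rcis (rr (ann m)) (Arg m)"
  shows "W l m \<le> 16 * W l m'" "W l m' \<le> 16 * W l m"
proof -
  define h :: real where "h = (1/2)^(ann m)"
  define s where "s = cmod m"
  define r where "r = rr (ann m)"
  have h: "h/2 < 1 - s" "1 - s \<le> h" "h > 0" "h \<le> 1"
    using ann_props[OF m] by (auto simp: h_def s_def power_le_one)
  have r: "r = 1 - h" "0 \<le> r" "r < 1" using rr_props by (auto simp: r_def rr_def h_def)
  have s: "0 \<le> s" "s < 1" using m by (auto simp: s_def)
  have m'n: "cmod m' = r" using r by (simp add: m'_def r_def[symmetric])
  have m'1: "cmod m' < 1" using m'n r by simp
  have diff: "cmod (m' - m) \<le> h/2"
  proof -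
    have "m = rcis s (Arg m)" by (simp add: s_def rcis_cmod_Arg)
    then have "m' - m = rcis (r - s) (Arg m)" by (simp add: m'_def r_def[symmetric] rcis_def algebra_simps)
    then have "cmod (m' - m) = \<bar>r - s\<bar>" by simp
    then show ?thesis using h r by auto
  qed
  define D where "D = cmod (1 - cnj l * m)"
  define D' where "D' = cmod (1 - cnj l * m')"
  have E: "cmod (cnj l * (m' - m)) \<le> h/2"
  proof -
    have "cmod (cnj l * (m' - m)) = cmod l * cmod (m' - m)" by (simp add: norm_mult)
    also have "\<dots> \<le> 1 * (h/2)" using l diff by (intro mult_mono) auto
    finally show ?thesis by simp
  qed
  have "(1 - cnj l * m) = (1 - cnj l * m') + cnj l * (m' - m)" by (simp add: algebra_simps)
  then have "D \<le> D' + cmod (cnj l * (m' - m))" unfolding D_def D'_def by (metis norm_triangle_ineq)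
  then have D1: "D \<le> D' + h/2" using E by linarith
  have "(1 - cnj l * m') = (1 - cnj l * m) - cnj l * (m' - m)" by (simp add: algebra_simps)
  then have "D' \<le> D + cmod (cnj l * (m' - m))" unfolding D_def D'_def by (metis norm_triangle_ineq4)
  then have D2: "D' \<le> D + h/2" using E by linarith
  have Dlow: "D \<ge> 1 - s" unfolding D_def s_def using denom_pos[OF m l] by simp
  have D'low: "D' \<ge> h" unfolding D'_def using denom_pos[OF m'1 l] m'n r by simp
  have Dp: "D > 0" using Dlow h by linarith
  have D'p: "D' > 0" using D'low h by linarith
  have Dsq1: "D'\<^sup>2 \<le> 4 * D\<^sup>2"
  proof -
    have "D' \<le> 2 * D" using D2 Dlow h by linarith
    then have "D'\<^sup>2 \<le> (2 * D)\<^sup>2" using D'p by (intro power_mono) auto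
    then show ?thesis by (simp add: power_mult_distrib)
  qed
  have Dsq2: "D\<^sup>2 \<le> (9/4) * D'\<^sup>2"
  proof -
    have "D \<le> (3/2) * D'" using D1 D'low h by linarith
    then have "D\<^sup>2 \<le> ((3/2) * D')\<^sup>2" using Dp by (intro power_mono) auto
    then show ?thesis by (simp add: power_mult_distrib power2_eq_square)
  qed
  have s1: "1 - s\<^sup>2 \<le> 2 * (1 - r\<^sup>2)"
  proof -
    have "1 - s\<^sup>2 = (1 - s) * (1 + s)" by (simp add: power2_eq_square algebra_simps)
    also have "\<dots> \<le> h * 2" using h s by (intro mult_mono) auto
    also have "h \<le> 1 - r\<^sup>2"
    proof -
      have "1 - r\<^sup>2 = h * (1 + r)" by (simp add: r(1) power2_eq_square algebra_simps)
      then show ?thesis using h r by (simp add: mult_le_cancel_left1)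
    qed
    finally show ?thesis by simp
  qed
  have s2: "1 - r\<^sup>2 \<le> 4 * (1 - s\<^sup>2)"
  proof -
    have "1 - r\<^sup>2 = h * (1 + r)" by (simp add: r(1) power2_eq_square algebra_simps)
    also have "\<dots> \<le> h * 2" using h r by (intro mult_left_mono) auto
    also have "\<dots> \<le> 4 * (1 - s)" using h(1) by (simp add: field_simps)
    also have "1 - s \<le> 1 - s\<^sup>2"
    proof -
      have "s\<^sup>2 \<le> s" using s by (simp add: power2_eq_square mult_left_le)
      then show ?thesis by simp
    qed
    finally show ?thesis by simp
  qed
  have A: "1 - (cmod l)\<^sup>2 \<ge> 0" using l by (simp add: abs_square_le_1 less_imp_le)
  have Wm: "W l m = (1 - (cmod l)\<^sup>2) * (1 - s\<^sup>2) / D\<^sup>2" unfolding W_def D_def s_def by simp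
  have Wm': "W l m' = (1 - (cmod l)\<^sup>2) * (1 - r\<^sup>2) / D'\<^sup>2" unfolding W_def D'_def m'n by simp
  have s2pos: "0 \<le> 1 - s\<^sup>2" using s by (simp add: abs_square_le_1 less_imp_le)
  have r2pos: "0 \<le> 1 - r\<^sup>2" using r by (simp add: abs_square_le_1 less_imp_le)
  show "W l m \<le> 16 * W l m'"
    unfolding Wm Wm'
  proof (rule frac_cmp)
    show "0 < D\<^sup>2" "0 < D'\<^sup>2" using Dp D'p by auto
    show "0 \<le> 1 - (cmod l)\<^sup>2" by (rule A)
    have "(1 - s\<^sup>2) * D'\<^sup>2 \<le> (2 * (1 - r\<^sup>2)) * (4 * D\<^sup>2)"
      using s1 Dsq1 s2pos by (intro mult_mono) auto
    moreover have "(2 * (1 - r\<^sup>2)) * (4 * D\<^sup>2) = 8 * ((1 - r\<^sup>2) * D\<^sup>2)" by simp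
    moreover have "0 \<le> (1 - r\<^sup>2) * D\<^sup>2" using r2pos by simp
    ultimately show "(1 - s\<^sup>2) * D'\<^sup>2 \<le> 16 * (1 - r\<^sup>2) * D\<^sup>2" by linarith
  qed
  show "W l m' \<le> 16 * W l m"
    unfolding Wm Wm'
  proof (rule frac_cmp)
    show "0 < D\<^sup>2" "0 < D'\<^sup>2" using Dp D'p by auto
    show "0 \<le> 1 - (cmod l)\<^sup>2" by (rule A)
    have "(1 - r\<^sup>2) * D\<^sup>2 \<le> (4 * (1 - s\<^sup>2)) * ((9/4) * D'\<^sup>2)"
      using s2 Dsq2 r2pos by (intro mult_mono) auto
    moreover have "(4 * (1 - s\<^sup>2)) * ((9/4) * D'\<^sup>2) = 9 * ((1 - s\<^sup>2) * D'\<^sup>2)" by simp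
    moreover have "0 \<le> (1 - s\<^sup>2) * D'\<^sup>2" using s2pos by simp
    ultimately show "(1 - r\<^sup>2) * D\<^sup>2 \<le> 16 * (1 - s\<^sup>2) * D'\<^sup>2" by linarith
  qed
qed

lemma M_tele:
  fixes a y :: real
  assumes "0 \<le> a" "a < 1" "0 < y" "y \<le> 1"
  shows "Gf a (1 - y) 1 \<le> 32 * ((1-a)/((1-a) + y/2) - (1-a)/((1-a) + y))"
proof -
  define x where "x = 1 - a"
  have x: "0 < x" "x \<le> 1" using assms by (auto simp: x_def)
  define r where "r = 1 - y"
  have den: "1 + (a * r)\<^sup>2 - 2 * (a * r) * 1 = (x + y - x*y)\<^sup>2"
    unfolding x_def r_def power2_eq_square by algebra
  have num1: "1 - a\<^sup>2 \<le> 2 * x"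
  proof -
    have "1 - a\<^sup>2 = x * (1 + a)" unfolding x_def power2_eq_square by algebra
    also have "\<dots> \<le> x * 2" using x assms by (intro mult_left_mono) auto
    finally show ?thesis by simp
  qed
  have num2: "1 - r\<^sup>2 \<le> 2 * y"
  proof -
    have "1 - r\<^sup>2 = y * (2 - y)" unfolding r_def power2_eq_square by algebra
    also have "\<dots> \<le> y * 2" using assms by (intro mult_left_mono) auto
    finally show ?thesis by simp
  qed
  have n1p: "0 \<le> 1 - a\<^sup>2" using assms by (simp add: abs_square_le_1)
  have n2p: "0 \<le> 1 - r\<^sup>2" using assms by (simp add: r_def abs_square_le_1)
  have num: "(1 - a\<^sup>2) * (1 - r\<^sup>2) \<le> 4 * (x * y)"
  proof -
    have "(1 - a\<^sup>2) * (1 - r\<^sup>2) \<le> (2 * x) * (2 * y)" using x n2p by (intro mult_mono num1 num2) auto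
    then show ?thesis by simp
  qed
  have xy: "x * y \<le> (x + y) / 2"
  proof -
    have "x * y \<le> x" using x assms by (simp add: mult_left_le)
    moreover have "x * y \<le> y" using x assms by (simp add: mult_right_le_one_le mult.commute)
    ultimately show ?thesis by simp
  qed
  have d1: "(x + y - x*y) \<ge> (x + y)/2" using xy by simp
  have d2: "(x + y - x*y)\<^sup>2 \<ge> ((x + y)/2)\<^sup>2" using d1 x assms by (intro power_mono) auto
  have pos: "((x + y)/2)\<^sup>2 > 0" using x assms by simp
  have "Gf a (1 - y) 1 = (1 - a\<^sup>2) * (1 - r\<^sup>2) / (x + y - x*y)\<^sup>2"
    unfolding Gf_def r_def[symmetric] den by simp
  also have "\<dots> \<le> 4 * (x * y) / ((x + y)/2)\<^sup>2"
    using num d2 pos n1p n2p x assms by (intro frac_le) auto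
  also have "\<dots> = 16 * (x * y) / (x + y)\<^sup>2" by (simp add: power2_eq_square field_simps)
  also have "\<dots> \<le> 32 * (x * y) / ((2*x + y) * (x + y))"
  proof -
    have e: "2 * (x + y)\<^sup>2 - (2*x + y) * (x + y) = y * (x + y)" unfolding power2_eq_square by algebra
    have "0 \<le> y * (x + y)" using x assms by simp
    then have P: "(2*x + y) * (x + y) \<le> 2 * (x + y)\<^sup>2" using e by linarith
    have Pp: "0 < (2*x + y) * (x + y)" using x assms by simp
    have "16 * (x * y) / (x + y)\<^sup>2 = 32 * (x * y) / (2 * (x + y)\<^sup>2)" by simp
    also have "\<dots> \<le> 32 * (x * y) / ((2*x + y) * (x + y))"
      using P Pp x assms by (intro divide_left_mono) auto
    finally show ?thesis .
  qed
  also have "\<dots> = 32 * (x/(x + y/2) - x/(x + y))"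
    using x assms by (simp add: field_simps)
  finally show ?thesis by (simp add: x_def)
qed

lemma M_sum:
  fixes a :: real
  assumes "0 \<le> a" "a < 1"
  shows "(\<Sum>j<n. Gf a (rr j) 1) \<le> 32"
proof -
  define \<psi> where "\<psi> j = (1-a)/((1-a) + (1/2::real)^j)" for j
  have "(\<Sum>j<n. Gf a (rr j) 1) \<le> (\<Sum>j<n. 32 * (\<psi> (Suc j) - \<psi> j))"
  proof (rule sum_mono)
    fix j assume "j \<in> {..<n}"
    have "Gf a (rr j) 1 \<le> 32 * ((1-a)/((1-a) + (1/2::real)^j/2) - (1-a)/((1-a) + (1/2)^j))"
      unfolding rr_def using assms by (intro M_tele) (auto simp: power_le_one)
    then show "Gf a (rr j) 1 \<le> 32 * (\<psi> (Suc j) - \<psi> j)" by (simp add: \<psi>_def)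
  qed
  also have "\<dots> = 32 * (\<psi> n - \<psi> 0)"
    by (simp only: sum_distrib_left[symmetric] sum_lessThan_telescope[of \<psi> n])
  also have "\<dots> \<le> 32"
  proof -
    have p: "(0::real) < (1/2)^n" by simp
    have "\<psi> n \<le> 1" using assms p by (simp add: \<psi>_def divide_le_eq)
    moreover have "\<psi> 0 \<ge> 0" using assms by (simp add: \<psi>_def)
    ultimately show ?thesis by simp
  qed
  finally show ?thesis .
qed

definition enum :: "complex set \<Rightarrow> complex list" where
  "enum S = sort_key Arg (SOME xs. set xs = S \<and> distinct xs)"

lemma enum_props:
  assumes "finite S"
  shows "set (enum S) = S" "distinct (enum S)" "sorted (map Arg (enum S))"
proof -
  have "set (SOME xs. set xs = S \<and> distinct xs) = S \<and> distinct (SOME xs. set xs = S \<and> distinct xs)"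
    using finite_distinct_list[OF assms] by (rule someI_ex)
  then show "set (enum S) = S" "distinct (enum S)" "sorted (map Arg (enum S))"
    by (auto simp: enum_def)
qed

lemma reindex_parity:
  assumes S: "finite S"
  defines "ks \<equiv> enum S"
  shows "(\<Sum>\<mu>\<in>{\<mu>\<in>S. \<exists>i<length ks. P i \<and> ks!i = \<mu>}. f \<mu>) = (\<Sum>i\<in>{i. i<length ks \<and> P i}. f (ks!i))"
proof -
  have set_ks: "set ks = S" "distinct ks" using enum_props[OF S] by (auto simp: ks_def)
  have "bij_betw (\<lambda>i. ks!i) {i. i<length ks \<and> P i} {\<mu>\<in>S. \<exists>i<length ks. P i \<and> ks!i = \<mu>}"
  proof (rule bij_betwI')
    fix i i' assume "i \<in> {i. i<length ks \<and> P i}" "i' \<in> {i. i<length ks \<and> P i}"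
    then show "(ks!i = ks!i') = (i = i')"
      using set_ks by (simp add: nth_eq_iff_index_eq)
  next
    fix i assume "i \<in> {i. i<length ks \<and> P i}"
    then show "ks!i \<in> {\<mu>\<in>S. \<exists>i<length ks. P i \<and> ks!i = \<mu>}" using set_ks nth_mem by blast
  next
    fix \<mu> assume "\<mu> \<in> {\<mu>\<in>S. \<exists>i<length ks. P i \<and> ks!i = \<mu>}"
    then show "\<exists>i\<in>{i. i<length ks \<and> P i}. \<mu> = ks!i" by auto
  qed
  then show ?thesis by (rule sum.reindex_bij_betw[symmetric])
qed

lemma annulus_bound:
  fixes l :: complex and S :: "complex set" and j :: nat
  assumes l: "cmod l < 1" and S: "finite S" and Sm: "\<And>\<mu>. \<mu> \<in> S \<Longrightarrow> cmod \<mu> < 1 \<and> ann \<mu> = j"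
  defines "ks \<equiv> enum S"
  shows "(\<Sum>i\<in>{i. i<length ks \<and> even i}. W l (ks!i)) \<ge> (\<Sum>i<length ks. W l (ks!i))/512 - Gf (cmod l) (rr j) 1 / 4"
    and "(\<Sum>i\<in>{i. i<length ks \<and> odd i}. W l (ks!i)) \<ge> (\<Sum>i<length ks. W l (ks!i))/512 - Gf (cmod l) (rr j) 1 / 4"
proof -
  define n where "n = length ks"
  define a where "a = cmod l"
  define \<alpha> where "\<alpha> = Arg l"
  define r where "r = rr j"
  define M where "M = Gf a r 1"
  define g where "g \<theta> = Gf a r (cos (\<theta> - \<alpha>))" for \<theta>
  define p where "p i = ks!i" for i
  define \<theta> where "\<theta> i = Arg (ks!i)" for i
  define y where "y i = g (\<theta> i)" for i
  have set_ks: "set ks = S" using enum_props[OF S] by (simp add: ks_def)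
  have sorted: "sorted (map Arg ks)" using enum_props[OF S] by (simp add: ks_def)
  have a: "0 \<le> a" "a < 1" using l by (auto simp: a_def)
  have r: "0 \<le> r" "r < 1" using rr_props by (auto simp: r_def)
  have pS: "p i \<in> S" if "i < n" for i
    using that set_ks nth_mem unfolding n_def p_def by metis
  have th: "\<theta> i = Arg (p i)" if "i < n" for i
    by (simp add: \<theta>_def p_def)
  have mono: "\<theta> i \<le> \<theta> i'" if "i \<le> i'" "i' < n" for i i'
  proof -
    have "(map Arg ks)!i \<le> (map Arg ks)!i'" using sorted that by (intro sorted_nth_mono) (auto simp: n_def)
    then show ?thesis unfolding \<theta>_def using that by (simp add: n_def)
  qed
  have Rng: "\<theta> i \<in> {x. -pi < x \<and> x \<le> pi}" if "i < n" for i
    using th[OF that] Arg_bounded by auto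
  have gb: "0 \<le> g x \<and> g x \<le> M" for x
    unfolding g_def M_def using Gf_bounds[OF a r, of "cos (x - \<alpha>)"] by auto
  have M0: "M \<ge> 0" using gb by (meson order_trans)
  have al: "-pi < \<alpha>" "\<alpha> \<le> pi" using Arg_bounded by (auto simp: \<alpha>_def)
  have gm: "g x \<le> g y" if "cos (x - \<alpha>) \<le> cos (y - \<alpha>)" for x y
    unfolding g_def using that by (intro Gf_mono[OF a r]) auto
  have tv: "tv y 0 n \<le> 7 * M"
    unfolding y_def
  proof (rule tv_four_pieces[where ?t1.0="\<alpha> - pi" and ?t2.0=\<alpha> and ?t3.0="\<alpha> + pi", OF mono Rng gb M0])
    show "\<alpha> - pi \<le> \<alpha>" "\<alpha> \<le> \<alpha> + pi" by auto
    show "g y \<le> g x" if "x \<in> {x. -pi < x \<and> x \<le> pi}" "y \<in> {x. -pi < x \<and> x \<le> pi}" "x \<le> y" "y \<le> \<alpha> - pi" for x y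
      using that al by (intro gm cos_pieces(1)) auto
    show "g x \<le> g y" if "x \<in> {x. -pi < x \<and> x \<le> pi}" "y \<in> {x. -pi < x \<and> x \<le> pi}" "\<alpha> - pi < x" "x \<le> y" "y \<le> \<alpha>" for x y
      using that al by (intro gm cos_pieces(2)) auto
    show "g y \<le> g x" if "x \<in> {x. -pi < x \<and> x \<le> pi}" "y \<in> {x. -pi < x \<and> x \<le> pi}" "\<alpha> < x" "x \<le> y" "y \<le> \<alpha> + pi" for x y
      using that al by (intro gm cos_pieces(3)) auto
    show "g x \<le> g y" if "x \<in> {x. -pi < x \<and> x \<le> pi}" "y \<in> {x. -pi < x \<and> x \<le> pi}" "\<alpha> + pi < x" "x \<le> y" for x y
      using that al by (intro gm cos_pieces(4)) auto
  qed
  have yW: "y i = W l (rcis r (\<theta> i))" for i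
    unfolding y_def g_def using W_rcis[OF l r] by (simp add: a_def \<alpha>_def)
  have harn: "W l (p i) \<le> 16 * y i" "y i \<le> 16 * W l (p i)" if "i < n" for i
  proof -
    have pm: "cmod (p i) < 1" "ann (p i) = j" using Sm pS[OF that] by auto
    have "rcis (rr (ann (p i))) (Arg (p i)) = rcis r (\<theta> i)" using pm th[OF that] by (simp add: r_def)
    then show "W l (p i) \<le> 16 * y i" "y i \<le> 16 * W l (p i)"
      using harnack[OF l pm(1)] yW[of i] by auto
  qed
  have yb: "0 \<le> y i \<and> y i \<le> M" if "i < n" for i using gb by (simp add: y_def)
  have sum_y: "(\<Sum>i<n. y i) \<ge> (\<Sum>i<n. W l (p i)) / 16"
  proof -
    have "(\<Sum>i<n. W l (p i)) \<le> (\<Sum>i<n. 16 * y i)" using harn by (intro sum_mono) auto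
    then show ?thesis by (simp add: sum_distrib_left[symmetric])
  qed
  have gen: "(\<Sum>i\<in>{i. i<n \<and> P i}. W l (p i)) \<ge> (\<Sum>i<n. W l (p i))/512 - M / 4"
    if PL: "(\<Sum>i\<in>{i. i<n \<and> P i}. y i) \<ge> ((\<Sum>i<n. y i) - 7 * M - M) / 2" for P
  proof -
    have "(\<Sum>i\<in>{i. i<n \<and> P i}. y i) \<le> (\<Sum>i\<in>{i. i<n \<and> P i}. 16 * W l (p i))"
      using harn by (intro sum_mono) auto
    then have h: "(\<Sum>i\<in>{i. i<n \<and> P i}. y i) / 16 \<le> (\<Sum>i\<in>{i. i<n \<and> P i}. W l (p i))"
      by (simp add: sum_distrib_left[symmetric])
    have ar: "\<And>A B C D M::real. A/16 \<le> B \<Longrightarrow> (C - 7*M - M)/2 \<le> A \<Longrightarrow> D/16 \<le> C \<Longrightarrow> D/512 - M/4 \<le> B"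
      by (simp add: field_simps)
    show ?thesis by (rule ar[OF h PL sum_y])
  qed
  have E: "(\<Sum>i\<in>{i. i<n \<and> even i}. y i) \<ge> ((\<Sum>i<n. y i) - 7 * M - M) / 2"
    using alt_lower(1)[OF yb tv M0] by simp
  have O: "(\<Sum>i\<in>{i. i<n \<and> odd i}. y i) \<ge> ((\<Sum>i<n. y i) - 7 * M - M) / 2"
    using alt_lower(2)[OF yb tv M0] by simp
  show "(\<Sum>i\<in>{i. i<length ks \<and> even i}. W l (ks!i)) \<ge> (\<Sum>i<length ks. W l (ks!i))/512 - Gf (cmod l) (rr j) 1 / 4"
    using gen[OF E] by (simp add: n_def p_def M_def a_def r_def)
  show "(\<Sum>i\<in>{i. i<length ks \<and> odd i}. W l (ks!i)) \<ge> (\<Sum>i<length ks. W l (ks!i))/512 - Gf (cmod l) (rr j) 1 / 4"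
    using gen[OF O] by (simp add: n_def p_def M_def a_def r_def)
qed

lemma v_bounds:
  fixes l m :: complex and \<delta> :: real
  assumes l: "cmod l < 1" and m: "cmod m < 1" and d: "\<delta> > 0" "\<delta> \<le> cmod (blaschke_factor l m)"
  shows "W l m / 2 \<le> - ln (cmod (blaschke_factor m l))"
    and "- ln (cmod (blaschke_factor m l)) \<le> W l m / (2 * \<delta>\<^sup>2)"
    and "0 \<le> - ln (cmod (blaschke_factor m l))"
proof -
  define x where "x = cmod (blaschke_factor m l)"
  have x2: "x\<^sup>2 = 1 - W l m" using bf_norm_sq[OF l m] by (simp add: x_def)
  have dx: "\<delta> \<le> x" using d bf_sym[OF l m] by (simp add: x_def)
  have xp: "x > 0" using d dx by linarith
  have Wn: "W l m \<ge> 0" by (rule W_nonneg[OF l m])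
  have x1: "x\<^sup>2 \<le> 1" using x2 Wn by simp
  have lnx2: "ln (x\<^sup>2) = 2 * ln x" using ln_realpow[of x 2] by simp
  have "ln (x\<^sup>2) \<le> x\<^sup>2 - 1" using xp by (intro ln_le_minus_one) simp
  then show "W l m / 2 \<le> - ln (cmod (blaschke_factor m l))" using lnx2 x2 by (simp add: x_def[symmetric])
  have "ln (1 / x\<^sup>2) \<le> 1 / x\<^sup>2 - 1" using xp by (intro ln_le_minus_one) simp
  moreover have "ln (1 / x\<^sup>2) = - 2 * ln x" using lnx2 xp by (simp add: ln_div)
  moreover have "1 / x\<^sup>2 - 1 = W l m / x\<^sup>2" using x2 xp by (simp add: field_simps)
  moreover have "W l m / x\<^sup>2 \<le> W l m / \<delta>\<^sup>2"
    using Wn dx d by (intro divide_left_mono power_mono) auto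
  ultimately show "- ln (cmod (blaschke_factor m l)) \<le> W l m / (2 * \<delta>\<^sup>2)"
    by (simp add: x_def[symmetric])
  have "ln x \<le> 0" using xp x1 by (metis abs_square_le_1 abs_of_pos ln_le_zero_iff)
  then show "0 \<le> - ln (cmod (blaschke_factor m l))" by (simp add: x_def[symmetric])
qed

lemma main_gen:
  fixes L Lk :: "complex set" and P :: "nat \<Rightarrow> bool" and l :: complex and \<delta> :: real
  assumes Lb: "L \<subseteq> ball 0 1" and Ls: "(\<lambda>m. 1 - (cmod m)\<^sup>2) summable_on L"
    and d: "\<delta> > 0" and sep: "\<And>a b. a \<in> L \<Longrightarrow> b \<in> L \<Longrightarrow> a \<noteq> b \<Longrightarrow> \<delta> \<le> cmod (blaschke_factor a b)"
    and lL: "l \<in> L"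
    and Lk: "Lk = {\<mu>\<in>L. \<exists>i<length (enum {x\<in>L. ann x = ann \<mu>}). P i \<and> enum {x\<in>L. ann x = ann \<mu>} ! i = \<mu>}"
    and HB: "\<And>j. finite {x\<in>L. ann x = j} \<Longrightarrow>
       (\<Sum>i\<in>{i. i<length (enum {x\<in>L. ann x = j}) \<and> P i}. W l (enum {x\<in>L. ann x = j} ! i))
        \<ge> (\<Sum>i<length (enum {x\<in>L. ann x = j}). W l (enum {x\<in>L. ann x = j} ! i))/512 - Gf (cmod l) (rr j) 1 / 4"
  shows "ln (1 / cmod (blaschke_prod (Lk - {l}) l)) \<ge> (\<delta>\<^sup>2/512) * ln (1 / cmod (blaschke_prod (L - {l}) l)) - 9/2"
proof -
  define Sj where "Sj j = {x\<in>L. ann x = j}" for j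
  define ks where "ks j = enum (Sj j)" for j
  define F where "F n = {\<mu>\<in>L. ann \<mu> < n}" for n
  define v where "v m = - ln (cmod (blaschke_factor m l))" for m
  have l1: "cmod l < 1" using Lb lL by auto
  have Lm: "cmod m < 1" if "m \<in> L" for m using Lb that by auto
  have Wnn: "W l m \<ge> 0" if "m \<in> L" for m using W_nonneg[OF l1 Lm[OF that]] .
  have Ffin: "finite (F n)" for n
  proof -
    have "F n \<subseteq> {x\<in>L. (1/2)^n \<le> 1 - (cmod x)\<^sup>2}"
    proof
      fix x assume x: "x \<in> F n"
      then have xL: "x \<in> L" "ann x < n" by (auto simp: F_def)
      have "(1/2::real)^n \<le> (1/2)^(Suc (ann x))" using xL by (intro power_decreasing) auto
      also have "\<dots> < 1 - cmod x" using ann_props[OF Lm[OF xL(1)]] by simp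
      also have "\<dots> \<le> 1 - (cmod x)\<^sup>2" using Lm[OF xL(1)] by (simp add: power2_eq_square mult_left_le)
      finally show "x \<in> {x\<in>L. (1/2)^n \<le> 1 - (cmod x)\<^sup>2}" using xL by auto
    qed
    moreover have "finite {x\<in>L. (1/2::real)^n \<le> 1 - (cmod x)\<^sup>2}"
      using Lm by (intro finite_big[OF Ls]) (auto simp: abs_square_le_1 less_imp_le)
    ultimately show ?thesis by (rule finite_subset)
  qed
  have Sfin: "finite (Sj j)" for j
    using Ffin[of "Suc j"] by (rule finite_subset[rotated]) (auto simp: Sj_def F_def)
  have Lk': "Lk = {\<mu>\<in>L. \<exists>i<length (ks (ann \<mu>)). P i \<and> ks (ann \<mu>) ! i = \<mu>}"
    unfolding Lk ks_def Sj_def ..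
  have HB': "(\<Sum>i\<in>{i. i<length (ks j) \<and> P i}. W l (ks j ! i)) \<ge> (\<Sum>i<length (ks j). W l (ks j ! i))/512 - Gf (cmod l) (rr j) 1 / 4" for j
    using HB[of j] Sfin[of j] unfolding ks_def Sj_def by simp
  have stepA: "(\<Sum>\<mu>\<in>F n \<inter> Lk. W l \<mu>) \<ge> (\<Sum>\<mu>\<in>F n. W l \<mu>)/512 - 8" for n
  proof -
    have part: "{x\<in>F n \<inter> Lk. ann x = j} = {\<mu>\<in>Sj j. \<exists>i<length (ks j). P i \<and> ks j ! i = \<mu>}" if "j < n" for j
      using that unfolding Lk' F_def Sj_def by auto
    have full: "{x\<in>F n. ann x = j} = {\<mu>\<in>Sj j. \<exists>i<length (ks j). True \<and> ks j ! i = \<mu>}" if "j < n" for j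
    proof -
      have "set (ks j) = Sj j" using enum_props[OF Sfin[of j]] by (simp add: ks_def)
      then show ?thesis using that unfolding F_def Sj_def by (auto simp: in_set_conv_nth)
    qed
    have "(\<Sum>\<mu>\<in>F n \<inter> Lk. W l \<mu>) = (\<Sum>j<n. \<Sum>\<mu>\<in>{x\<in>F n \<inter> Lk. ann x = j}. W l \<mu>)"
      by (rule sum.group[symmetric]) (use Ffin in \<open>auto simp: F_def\<close>)
    also have "\<dots> = (\<Sum>j<n. \<Sum>i\<in>{i. i<length (ks j) \<and> P i}. W l (ks j ! i))"
    proof (rule sum.cong[OF refl])
      fix j assume "j \<in> {..<n}"
      then have jn: "j < n" by simp
      show "(\<Sum>\<mu>\<in>{x\<in>F n \<inter> Lk. ann x = j}. W l \<mu>) = (\<Sum>i\<in>{i. i<length (ks j) \<and> P i}. W l (ks j ! i))"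
        unfolding part[OF jn] ks_def by (rule reindex_parity[OF Sfin])
    qed
    also have "\<dots> \<ge> (\<Sum>j<n. (\<Sum>i<length (ks j). W l (ks j ! i))/512 - Gf (cmod l) (rr j) 1 / 4)"
      by (intro sum_mono HB')
    finally have A: "(\<Sum>\<mu>\<in>F n \<inter> Lk. W l \<mu>) \<ge> (\<Sum>j<n. (\<Sum>i<length (ks j). W l (ks j ! i))/512 - Gf (cmod l) (rr j) 1 / 4)" .
    have B: "(\<Sum>\<mu>\<in>F n. W l \<mu>) = (\<Sum>j<n. \<Sum>i<length (ks j). W l (ks j ! i))"
    proof -
      have "(\<Sum>\<mu>\<in>F n. W l \<mu>) = (\<Sum>j<n. \<Sum>\<mu>\<in>{x\<in>F n. ann x = j}. W l \<mu>)"
        by (rule sum.group[symmetric]) (use Ffin in \<open>auto simp: F_def\<close>)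
      also have "\<dots> = (\<Sum>j<n. \<Sum>i\<in>{i. i<length (ks j) \<and> True}. W l (ks j ! i))"
      proof (rule sum.cong[OF refl])
        fix j assume "j \<in> {..<n}"
        then have jn: "j < n" by simp
        show "(\<Sum>\<mu>\<in>{x\<in>F n. ann x = j}. W l \<mu>) = (\<Sum>i\<in>{i. i<length (ks j) \<and> True}. W l (ks j ! i))"
          unfolding full[OF jn] ks_def by (rule reindex_parity[OF Sfin])
      qed
      also have "\<dots> = (\<Sum>j<n. \<Sum>i<length (ks j). W l (ks j ! i))"
        by (simp add: lessThan_def)
      finally show ?thesis .
    qed
    have C: "(\<Sum>j<n. Gf (cmod l) (rr j) 1) \<le> 32" using l1 by (intro M_sum) auto
    have "(\<Sum>j<n. (\<Sum>i<length (ks j). W l (ks j ! i))/512 - Gf (cmod l) (rr j) 1 / 4)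
        = (\<Sum>j<n. \<Sum>i<length (ks j). W l (ks j ! i))/512 - (\<Sum>j<n. Gf (cmod l) (rr j) 1) / 4"
      by (simp add: sum_subtractf sum_divide_distrib)
    then show ?thesis using A B C by linarith
  qed
  have vb: "W l m / 2 \<le> v m" "v m \<le> W l m / (2 * \<delta>\<^sup>2)" "0 \<le> v m" if "m \<in> L - {l}" for m
    using v_bounds[OF l1 Lm d(1) sep[OF lL]] that by (auto simp: v_def)
  have stepC: "(\<Sum>\<mu>\<in>F n \<inter> Lk - {l}. v \<mu>) \<ge> (\<delta>\<^sup>2/512) * (\<Sum>\<mu>\<in>F n - {l}. v \<mu>) - 9/2" for n
  proof -
    have fin1: "finite (F n \<inter> Lk)" using Ffin by auto
    have FL: "F n \<subseteq> L" "Lk \<subseteq> L" by (auto simp: F_def Lk')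
    have s1: "(\<Sum>\<mu>\<in>F n \<inter> Lk - {l}. v \<mu>) \<ge> (\<Sum>\<mu>\<in>F n \<inter> Lk - {l}. W l \<mu> / 2)"
      using FL vb by (intro sum_mono) auto
    have "(\<Sum>\<mu>\<in>F n \<inter> Lk - {l}. W l \<mu>) \<ge> (\<Sum>\<mu>\<in>F n \<inter> Lk. W l \<mu>) - 1"
      using sum_diff1[OF fin1, of "W l" l] W_le1[OF l1 l1] by auto
    then have s2: "(\<Sum>\<mu>\<in>F n \<inter> Lk - {l}. W l \<mu> / 2) \<ge> ((\<Sum>\<mu>\<in>F n. W l \<mu>)/512 - 9) / 2"
      using stepA[of n] by (simp add: sum_divide_distrib[symmetric])
    have s3: "(\<Sum>\<mu>\<in>F n. W l \<mu>) \<ge> (\<Sum>\<mu>\<in>F n - {l}. W l \<mu>)"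
      using FL Wnn Ffin by (intro sum_mono2) auto
    have s4: "(\<Sum>\<mu>\<in>F n - {l}. W l \<mu>) \<ge> (\<Sum>\<mu>\<in>F n - {l}. 2 * \<delta>\<^sup>2 * v \<mu>)"
    proof (intro sum_mono)
      fix m assume "m \<in> F n - {l}"
      then have "m \<in> L - {l}" using FL by auto
      then have "v m \<le> W l m / (2 * \<delta>\<^sup>2)" by (rule vb)
      then show "2 * \<delta>\<^sup>2 * v m \<le> W l m" using d by (simp add: field_simps)
    qed
    have "(\<Sum>\<mu>\<in>F n - {l}. 2 * \<delta>\<^sup>2 * v \<mu>) = 2 * \<delta>\<^sup>2 * (\<Sum>\<mu>\<in>F n - {l}. v \<mu>)"
      by (simp add: sum_distrib_left)
    then show ?thesis using s1 s2 s3 s4 by (simp add: field_simps)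
  qed
  have A1: "Lk - {l} \<subseteq> ball 0 1" "(\<lambda>m. 1 - (cmod m)\<^sup>2) summable_on (Lk - {l})" "l \<notin> Lk - {l}"
    using Lb Lk' by (auto intro: summable_on_subset_banach[OF Ls])
  have A0: "L - {l} \<subseteq> ball 0 1" "(\<lambda>m. 1 - (cmod m)\<^sup>2) summable_on (L - {l})" "l \<notin> L - {l}"
    using Lb by (auto intro: summable_on_subset_banach[OF Ls])
  note P1 = prod_conv[OF A1(1,2) l1 A1(3)]
  note P0 = prod_conv[OF A0(1,2) l1 A0(3)]
  define Sv where "Sv = infsum v (Lk - {l})"
  have vs1: "v summable_on (Lk - {l})" using P1(1) by (simp add: v_def[abs_def])
  have vs0: "v summable_on (L - {l})" using P0(1) by (simp add: v_def[abs_def])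
  have Lksub: "Lk \<subseteq> L" by (auto simp: Lk')
  have fin_le: "(\<Sum>\<mu>\<in>F n \<inter> Lk - {l}. v \<mu>) \<le> Sv" for n
    unfolding Sv_def using Ffin vb Lksub by (intro finite_sum_le_infsum[OF vs1]) auto
  have c: "\<delta>\<^sup>2/512 > 0" using d by simp
  have "infsum v (L - {l}) \<le> (Sv + 9/2) / (\<delta>\<^sup>2/512)"
  proof (rule infsum_le_finite_sums[OF vs0])
    fix Z assume Z: "finite Z" "Z \<subseteq> L - {l}"
    define n where "n = Suc (\<Sum>z\<in>Z. ann z)"
    have "ann z < n" if "z \<in> Z" for z
      using member_le_sum[of z Z ann] that Z(1) by (simp add: n_def)
    then have ZF: "Z \<subseteq> F n - {l}" using Z by (auto simp: F_def)
    have "sum v Z \<le> (\<Sum>\<mu>\<in>F n - {l}. v \<mu>)"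
      using ZF Ffin vb by (intro sum_mono2) (auto simp: F_def)
    also have "\<dots> \<le> ((\<Sum>\<mu>\<in>F n \<inter> Lk - {l}. v \<mu>) + 9/2) / (\<delta>\<^sup>2/512)"
      using stepC[of n] c by (simp add: field_simps)
    also have "\<dots> \<le> (Sv + 9/2) / (\<delta>\<^sup>2/512)"
      using fin_le[of n] c by (intro divide_right_mono) auto
    finally show "sum v Z \<le> (Sv + 9/2) / (\<delta>\<^sup>2/512)" .
  qed
  then have "(\<delta>\<^sup>2/512) * infsum v (L - {l}) - 9/2 \<le> Sv" using c by (simp add: field_simps)
  moreover have "ln (1 / cmod (blaschke_prod (Lk - {l}) l)) = Sv" using P1(3) by (simp add: Sv_def v_def[abs_def])
  moreover have "ln (1 / cmod (blaschke_prod (L - {l}) l)) = infsum v (L - {l})" using P0(3) by (simp add: v_def[abs_def])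
  ultimately show ?thesis by simp
qed

theorem corollary3p2:
  fixes L :: "complex set"
  assumes "blaschke_seq L" and "separated L"
  shows "\<exists>L1 L2 c \<eta>. L1 \<union> L2 = L \<and> L1 \<inter> L2 = {} \<and> c > 0 \<and> \<eta> > (0::real) \<and>
     (\<forall>Lk\<in>{L1, L2}. \<forall>l\<in>L.
        ln (1 / cmod (blaschke_prod (Lk - {l}) l))
          \<ge> c * ln (1 / cmod (blaschke_prod (L - {l}) l)) - \<eta>)"
proof -
  have Lb: "L \<subseteq> ball 0 1" and Ls: "(\<lambda>m. 1 - (cmod m)\<^sup>2) summable_on L"
    using assms(1) by (auto simp: blaschke_seq_def)
  obtain \<delta> where d: "\<delta> > 0" and sep: "\<And>a b. a \<in> L \<Longrightarrow> b \<in> L \<Longrightarrow> a \<noteq> b \<Longrightarrow> \<delta> \<le> cmod (blaschke_factor a b)"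
    using assms(2) by (auto simp: separated_def)
  define ks where "ks j = enum {x\<in>L. ann x = j}" for j
  define L1 where "L1 = {\<mu>\<in>L. \<exists>i<length (enum {x\<in>L. ann x = ann \<mu>}). even i \<and> enum {x\<in>L. ann x = ann \<mu>} ! i = \<mu>}"
  define L2 where "L2 = {\<mu>\<in>L. \<exists>i<length (enum {x\<in>L. ann x = ann \<mu>}). odd i \<and> enum {x\<in>L. ann x = ann \<mu>} ! i = \<mu>}"
  have Lm: "cmod m < 1" if "m \<in> L" for m using Lb that by auto
  have Sfin: "finite {x\<in>L. ann x = j}" for j
  proof -
    have "{x\<in>L. ann x = j} \<subseteq> {x\<in>L. (1/2)^(Suc j) \<le> 1 - (cmod x)\<^sup>2}"
    proof
      fix x assume x: "x \<in> {x\<in>L. ann x = j}"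
      then have xL: "x \<in> L" "ann x = j" by auto
      have "(1/2::real)^(Suc j) < 1 - cmod x" using ann_props[OF Lm[OF xL(1)]] xL by simp
      also have "\<dots> \<le> 1 - (cmod x)\<^sup>2" using Lm[OF xL(1)] by (simp add: power2_eq_square mult_left_le)
      finally show "x \<in> {x\<in>L. (1/2)^(Suc j) \<le> 1 - (cmod x)\<^sup>2}" using xL by auto
    qed
    moreover have "finite {x\<in>L. (1/2::real)^(Suc j) \<le> 1 - (cmod x)\<^sup>2}"
      using Lm by (intro finite_big[OF Ls]) (auto simp: abs_square_le_1 less_imp_le)
    ultimately show ?thesis by (rule finite_subset)
  qed
  have idx: "\<exists>i<length (enum {x\<in>L. ann x = ann \<mu>}). enum {x\<in>L. ann x = ann \<mu>} ! i = \<mu>" if "\<mu> \<in> L" for \<mu>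
  proof -
    have "\<mu> \<in> set (enum {x\<in>L. ann x = ann \<mu>})" using enum_props(1)[OF Sfin] that by auto
    then show ?thesis by (simp add: in_set_conv_nth)
  qed
  have U: "L1 \<union> L2 = L"
  proof
    show "L1 \<union> L2 \<subseteq> L" by (auto simp: L1_def L2_def)
    show "L \<subseteq> L1 \<union> L2"
    proof
      fix \<mu> assume "\<mu> \<in> L"
      then obtain i where "i<length (enum {x\<in>L. ann x = ann \<mu>})" "enum {x\<in>L. ann x = ann \<mu>} ! i = \<mu>"
        using idx by blast
      then show "\<mu> \<in> L1 \<union> L2" using \<open>\<mu> \<in> L\<close> unfolding L1_def L2_def by (cases "even i") auto
    qed
  qed
  have I: "L1 \<inter> L2 = {}"
  proof (rule ccontr)
    assume "L1 \<inter> L2 \<noteq> {}"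
    then obtain \<mu> i i' where h: "i<length (enum {x\<in>L. ann x = ann \<mu>})" "even i" "enum {x\<in>L. ann x = ann \<mu>} ! i = \<mu>"
      "i'<length (enum {x\<in>L. ann x = ann \<mu>})" "odd i'" "enum {x\<in>L. ann x = ann \<mu>} ! i' = \<mu>"
      unfolding L1_def L2_def by blast
    have "distinct (enum {x\<in>L. ann x = ann \<mu>})" using enum_props(2)[OF Sfin] .
    then have "i = i'" using h by (metis nth_eq_iff_index_eq)
    then show False using h by auto
  qed
  have l1c: "cmod l < 1" if "l \<in> L" for l using Lm that .
  have main: "\<forall>Lk\<in>{L1, L2}. \<forall>l\<in>L. ln (1 / cmod (blaschke_prod (Lk - {l}) l))
          \<ge> (\<delta>\<^sup>2/512) * ln (1 / cmod (blaschke_prod (L - {l}) l)) - 9/2"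
  proof (intro ballI)
    fix Lk l assume Lk: "Lk \<in> {L1, L2}" and lL: "l \<in> L"
    show "ln (1 / cmod (blaschke_prod (Lk - {l}) l)) \<ge> (\<delta>\<^sup>2/512) * ln (1 / cmod (blaschke_prod (L - {l}) l)) - 9/2"
    proof (cases "Lk = L1")
      case True
      show ?thesis
      proof (rule main_gen[OF Lb Ls d sep lL, where P = even])
        show "Lk = {\<mu>\<in>L. \<exists>i<length (enum {x\<in>L. ann x = ann \<mu>}). even i \<and> enum {x\<in>L. ann x = ann \<mu>} ! i = \<mu>}"
          using True by (simp add: L1_def)
        fix j assume "finite {x\<in>L. ann x = j}"
        then show "(\<Sum>i\<in>{i. i<length (enum {x\<in>L. ann x = j}) \<and> even i}. W l (enum {x\<in>L. ann x = j} ! i))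
          \<ge> (\<Sum>i<length (enum {x\<in>L. ann x = j}). W l (enum {x\<in>L. ann x = j} ! i))/512 - Gf (cmod l) (rr j) 1 / 4"
          using Lm by (intro annulus_bound(1)[OF l1c[OF lL]]) auto
      qed (auto)
    next
      case False
      then have L2: "Lk = L2" using Lk by auto
      show ?thesis
      proof (rule main_gen[OF Lb Ls d sep lL, where P = odd])
        show "Lk = {\<mu>\<in>L. \<exists>i<length (enum {x\<in>L. ann x = ann \<mu>}). odd i \<and> enum {x\<in>L. ann x = ann \<mu>} ! i = \<mu>}"
          using L2 by (simp add: L2_def)
        fix j assume "finite {x\<in>L. ann x = j}"
        then show "(\<Sum>i\<in>{i. i<length (enum {x\<in>L. ann x = j}) \<and> odd i}. W l (enum {x\<in>L. ann x = j} ! i))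
          \<ge> (\<Sum>i<length (enum {x\<in>L. ann x = j}). W l (enum {x\<in>L. ann x = j} ! i))/512 - Gf (cmod l) (rr j) 1 / 4"
          using Lm by (intro annulus_bound(2)[OF l1c[OF lL]]) auto
      qed (auto)
    qed
  qed
  show ?thesis
    by (rule exI[of _ L1], rule exI[of _ L2], rule exI[of _ "\<delta>\<^sup>2/512"], rule exI[of _ "9/2"])
       (use U I d main in auto)
qed

end
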